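(* Let $m$ be a natural number with $m>3$. If there exists a natural number $n$ such that the $n$-th term $G(n,m)$ of the Goodstein sequence $G(m)$ is $0$, then there is some $k<n$ such that $G(k,m)<G(k-1,m)$.
   Context: For a natural number base $b>1$, the hereditary representation $m\langle b\rangle$ of $m$ is $\sum_{i=0}^{l} a_i b^{i}$ with $0\le a_i<b$, $a_l\ne0$, each exponent itself written in hereditary representation in base $b$, recursively. $m\langle b\rangle''$ is obtained by syntactically replacing every $b$ by $b+1$ in $m\langle b\rangle$. The Goodstein sequence $G(m)=\{m, m''-1, (m''-1)''-1,\dots\}$ starts from $m$ in base $2$; its $n$-th term is $G(n,m)$, with $G(1,m)=m$ in base $2$, $G(k,m)$ written in base $k+1$, and $G(k+1,m)=G(k,m)\langle k+1\rangle''-1$. *)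

theory Defs
  imports Main
begin

text \<open>Hereditary base change: write n in hereditary base b and replace every b by c.
  Digit i of n in base b is (n div b^i) mod b; exponents i are themselves
  converted recursively (only i < n can carry a nonzero digit).\<close>
function hbump :: "nat \<Rightarrow> nat \<Rightarrow> nat \<Rightarrow> nat" where
  "hbump b c n = (\<Sum>i<n. ((n div b ^ i) mod b) * c ^ (hbump b c i))"
  by pat_completeness auto
termination
  by (relation "measure (\<lambda>(b, c, n). n)") auto

declare hbump.simps[simp del]

text \<open>Goodstein sequence, 1-indexed: goodstein 1 m = m,
  goodstein (k+1) m = (goodstein k m)<k+1>'' - 1.  Index 0 is a dummy set to m.\<close>
fun goodstein :: "nat \<Rightarrow> nat \<Rightarrow> nat" where
  "goodstein 0 m = m"
| "goodstein (Suc 0) m = m"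
| "goodstein (Suc (Suc k)) m = hbump (Suc (Suc k)) (Suc (Suc (Suc k))) (goodstein (Suc k) m) - 1"

end

theory Submission
  imports Defs
begin

lemma digits_sum:
  fixes b n :: nat
  assumes "b \<ge> 2"
  shows "(\<Sum>i<k. ((n div b ^ i) mod b) * b ^ i) = n mod b ^ k"
proof (induction k)
  case 0
  then show ?case by simp
next
  case (Suc k)
  have "n mod b ^ Suc k = n mod b ^ k + b ^ k * (n div b ^ k mod b)"
    unfolding power_Suc2 mod_mult2_eq by simp
  then show ?case using Suc by (simp add: mult.commute)
qed

lemma hbump_ge:
  fixes b c :: nat
  assumes "b \<ge> 2" "c \<ge> b"
  shows "n \<le> hbump b c n"
proof (induction n rule: less_induct)
  case (less n)
  have "n = n mod b ^ n"
  proof -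
    have "n < 2 ^ n" by simp
    also have "\<dots> \<le> b ^ n" using assms by (simp add: power_mono)
    finally show ?thesis by simp
  qed
  also have "\<dots> = (\<Sum>i<n. ((n div b ^ i) mod b) * b ^ i)"
    using digits_sum[OF assms(1)] by simp
  also have "\<dots> \<le> (\<Sum>i<n. ((n div b ^ i) mod b) * c ^ (hbump b c i))"
  proof (rule sum_mono)
    fix i assume "i \<in> {..<n}"
    then have "i \<le> hbump b c i" using less by simp
    moreover have "b ^ i \<le> c ^ i" using assms by (simp add: power_mono)
    moreover have "c ^ i \<le> c ^ hbump b c i" using assms \<open>i \<le> hbump b c i\<close>
      by (intro power_increasing) auto
    ultimately show "((n div b ^ i) mod b) * b ^ i \<le> ((n div b ^ i) mod b) * c ^ (hbump b c i)"
      by simp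
  qed
  also have "\<dots> = hbump b c n" by (simp add: hbump.simps[of b c n])
  finally show ?case .
qed

theorem lemma1:
  fixes m n :: nat
  assumes "m > 3"
    and "goodstein n m = 0"
  shows "\<exists>k. 2 \<le> k \<and> k < n \<and> goodstein k m < goodstein (k - 1) m"
proof (rule ccontr)
  assume H: "\<not> ?thesis"
  have claim: "Suc j < n \<Longrightarrow> goodstein (Suc j) m \<ge> m" for j
  proof (induction j)
    case 0 then show ?case by simp
  next
    case (Suc j)
    have "\<not> goodstein (Suc (Suc j)) m < goodstein (Suc j) m"
      proof
      assume "goodstein (Suc (Suc j)) m < goodstein (Suc j) m"
      then have "2 \<le> Suc (Suc j) \<and> Suc (Suc j) < n \<and> goodstein (Suc (Suc j)) m < goodstein (Suc (Suc j) - 1) m"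
        using Suc.prems by simp
      then show False using H by blast
    qed
    then show ?case using Suc by simp
  qed
  obtain j where n: "n = Suc (Suc j)"
    using assms by (cases n; cases "n - 1") auto
  have g: "goodstein (Suc j) m \<ge> m" using claim n by simp
  have "goodstein (Suc j) m \<le> hbump (Suc (Suc j)) (Suc (Suc (Suc j))) (goodstein (Suc j) m)"
    by (rule hbump_ge) auto
  then have "goodstein n m \<ge> m - 1" using n g by simp
  then show False using assms by simp
qed

end
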